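(* Let $N=2^n$. Every discrete bivariate Haar wavelet $\mathbf{h}^e_{p,q}$ satisfies $\|\nabla\mathbf{h}^e_{p,q}\|_1\le 8$.
   Context: Haar system: $H^0=\mathbf{1}_{[0,1)}$, $H^1=\mathbf{1}_{[0,1/2)}-\mathbf{1}_{[1/2,1)}$; for $e=(e_1,e_2)\in\{(0,1),(1,0),(1,1)\}$, $H^e(u,v)=H^{e_1}(u)H^{e_2}(v)$ and $H^e_{p,q}(x)=2^pH^e(2^px-q)$ for $p\ge0$, $q\in\mathbb{Z}^2\cap2^p[0,1)^2$. Identifying $\mathbf{X}\in\mathbb{C}^{N\times N}$ with the function on $[0,1)^2$ equal to $NX_{j,k}$ on $[\frac{j-1}{N},\frac jN)\times[\frac{k-1}{N},\frac kN)$, the discrete bivariate Haar wavelets $\mathbf{h}^e_{p,q}$ are the images corresponding to $H^e_{p,q}$, $0\le p\le n-1$. Discrete gradient: $\nabla\mathbf{X}$ collects all differences $X_{j+1,k}-X_{j,k}$ ($1\le j\le N-1$) and $X_{j,k+1}-X_{j,k}$ ($1\le k\le N-1$), and $\|\nabla\mathbf{X}\|_1$ is the sum of their absolute values. *)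

theory Defs
  imports Complex_Main
begin

definition haar0 :: "real \<Rightarrow> real" where
  "haar0 x = (if 0 \<le> x \<and> x < 1 then 1 else 0)"

definition haar1 :: "real \<Rightarrow> real" where
  "haar1 x = (if 0 \<le> x \<and> x < 1/2 then 1 else if 1/2 \<le> x \<and> x < 1 then -1 else 0)"

definition haar_uni :: "nat \<Rightarrow> real \<Rightarrow> real" where
  "haar_uni b = (if b = 0 then haar0 else haar1)"

definition haar_biv :: "nat \<times> nat \<Rightarrow> real \<times> real \<Rightarrow> real" where
  "haar_biv e x = haar_uni (fst e) (fst x) * haar_uni (snd e) (snd x)"

definition haar_pq :: "nat \<times> nat \<Rightarrow> nat \<Rightarrow> int \<times> int \<Rightarrow> real \<times> real \<Rightarrow> real" where
  "haar_pq e p q x =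
     2 ^ p * haar_biv e (2 ^ p * fst x - of_int (fst q), 2 ^ p * snd x - of_int (snd q))"

text \<open>Discrete Haar wavelet image of size N = 2^n, indices j,k in {1..N}:
  the function H^e_{p,q} (constant on the grid cells since p \<le> n-1) takes the
  value N * X_{j,k} on the cell [(j-1)/N, j/N) x [(k-1)/N, k/N); we evaluate it at
  the lower-left corner of the cell.\<close>
definition haar_img :: "nat \<Rightarrow> nat \<times> nat \<Rightarrow> nat \<Rightarrow> int \<times> int \<Rightarrow> nat \<Rightarrow> nat \<Rightarrow> real" where
  "haar_img n e p q j k =
     haar_pq e p q ((real j - 1) / 2 ^ n, (real k - 1) / 2 ^ n) / 2 ^ n"

definition grad_l1 :: "nat \<Rightarrow> (nat \<Rightarrow> nat \<Rightarrow> real) \<Rightarrow> real" where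
  "grad_l1 N X =
     (\<Sum>j\<in>{1..<N}. \<Sum>k\<in>{1..N}. \<bar>X (j+1) k - X j k\<bar>)
   + (\<Sum>j\<in>{1..N}. \<Sum>k\<in>{1..<N}. \<bar>X j (k+1) - X j k\<bar>)"

end

theory Submission
  imports Defs
begin

definition g :: "nat \<Rightarrow> nat \<Rightarrow> int \<Rightarrow> real" where
  "g b r T = haar_uni b (of_int T / (2 * real r))"

lemma g_bound: "\<bar>g b r T\<bar> \<le> 1"
  by (auto simp: g_def haar_uni_def haar0_def haar1_def)

lemma g_zero: assumes "r > 0" "T < 0 \<or> T \<ge> 2 * int r" shows "g b r T = 0"
proof -
  have "\<not> (0 \<le> of_int T / (2 * real r) \<and> of_int T / (2 * real r) < (1::real))"
    using assms by (auto simp: divide_simps)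
  moreover have "\<not> (0 \<le> of_int T / (2 * real r) \<and> of_int T / (2 * real r) < (1/2::real))"
    using assms by (auto simp: divide_simps)
  ultimately show ?thesis by (auto simp: g_def haar_uni_def haar0_def haar1_def)
qed

lemma cast1: "((real_of_int T) < 2 * real r) = (T < 2 * int r)"
  by (metis of_int_less_iff of_int_mult of_int_numeral of_int_of_nat_eq)
lemma cast2: "((real_of_int T) < real r) = (T < int r)"
  by (metis of_int_less_iff of_int_of_nat_eq)

lemma g_const: assumes "r > 0" "T \<noteq> 0" "T \<noteq> int r" "T \<noteq> 2 * int r"
  shows "g b r T = g b r (T - 1)"
proof -
  have r: "real r > 0" using assms by simp
  have e1: "(0 \<le> of_int T / (2 * real r)) = (0 \<le> (of_int (T - 1) / (2 * real r) :: real))"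
    using assms r by (auto simp: divide_simps)
  have e2: "(of_int T / (2 * real r) < 1) = ((of_int (T - 1) / (2 * real r) :: real) < 1)"
  proof -
    have "(of_int T / (2 * real r) < (1::real)) = (T < 2 * int r)" using r by (simp add: divide_simps cast1 cast2)
    moreover have "((of_int (T - 1) / (2 * real r) :: real) < 1) = (T - 1 < 2 * int r)" using r cast1[of "T-1" r] by (simp add: divide_simps)
    ultimately show ?thesis using assms by auto
  qed
  have e3: "(of_int T / (2 * real r) < 1/2) = ((of_int (T - 1) / (2 * real r) :: real) < 1/2)"
  proof -
    have "(of_int T / (2 * real r) < (1/2::real)) = (T < int r)" using r by (simp add: divide_simps cast1 cast2)
    moreover have "((of_int (T - 1) / (2 * real r) :: real) < 1/2) = (T - 1 < int r)" using r cast2[of "T-1" r] by (simp add: divide_simps) (smt (verit))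
    ultimately show ?thesis using assms by auto
  qed
  define x :: real where "x = of_int T / (2 * real r)"
  define y :: real where "y = of_int (T - 1) / (2 * real r)"
  have f1: "(0 \<le> x) = (0 \<le> y)" "(x < 1) = (y < 1)" "(x < 1/2) = (y < 1/2)" "(1/2 \<le> x) = (1/2 \<le> y)"
    using e1 e2 e3 unfolding x_def y_def by (auto simp only: not_less[symmetric])
  have "g b r T = haar_uni b x" "g b r (T - 1) = haar_uni b y" unfolding g_def x_def y_def by simp_all
  moreover have "haar0 x = haar0 y" unfolding haar0_def by (simp only: f1)
  moreover have "haar1 x = haar1 y" unfolding haar1_def by (simp only: f1)
  ultimately show ?thesis unfolding haar_uni_def by simp
qed

lemma sum_ind_le:
  assumes "finite A" "a \<ge> 0"
  shows "(\<Sum>j\<in>A. if int j = c then a else (0::real)) \<le> a"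
proof -
  have "(\<Sum>j\<in>A. if int j = c then a else (0::real)) = (\<Sum>j\<in>{j\<in>A. int j = c}. a)"
    using assms by (simp add: sum.inter_filter[symmetric])
  also have "\<dots> = a * card {j\<in>A. int j = c}" by simp
  also have "card {j\<in>A. int j = c} \<le> 1"
  proof -
    have "{j\<in>A. int j = c} \<subseteq> {nat c}" by auto
    then have "card {j\<in>A. int j = c} \<le> card {nat c}" by (intro card_mono) auto
    then show ?thesis by simp
  qed
  hence "a * card {j\<in>A. int j = c} \<le> a * 1" using assms
    by (intro mult_left_mono) auto
  hence "a * card {j\<in>A. int j = c} \<le> a" by simp
  finally show ?thesis .
qed

lemma tv_bound:
  assumes "r > 0"
  shows "(\<Sum>j\<in>{1..<N}. \<bar>g b r (int j - Q) - g b r (int j - Q - 1)\<bar>) \<le> 4"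
proof -
  have pt: "\<bar>g b r (int j - Q) - g b r (int j - Q - 1)\<bar> \<le>
      (if int j = Q then 1 else 0) + (if int j = Q + int r then 2 else 0) + (if int j = Q + 2 * int r then 1 else 0)" for j
  proof -
    consider "int j = Q" | "int j = Q + int r" | "int j = Q + 2 * int r"
      | "int j \<noteq> Q" "int j \<noteq> Q + int r" "int j \<noteq> Q + 2 * int r" by blast
    then show ?thesis
    proof cases
      case 1
      then have "g b r (int j - Q - 1) = 0" using assms by (intro g_zero) auto
      then show ?thesis using 1 assms g_bound[of b r "int j - Q"] by auto
    next
      case 2
      then show ?thesis using assms g_bound[of b r "int j - Q"] g_bound[of b r "int j - Q - 1"] by auto
    next
      case 3
      then have "g b r (int j - Q) = 0" using assms by (intro g_zero) auto
      then show ?thesis using 3 assms g_bound[of b r "int j - Q - 1"] by auto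
    next
      case 4
      then have "g b r (int j - Q) = g b r (int j - Q - 1)" using assms by (intro g_const) auto
      then show ?thesis using 4 by simp
    qed
  qed
  have "(\<Sum>j\<in>{1..<N}. \<bar>g b r (int j - Q) - g b r (int j - Q - 1)\<bar>) \<le>
     (\<Sum>j\<in>{1..<N}. (if int j = Q then 1 else 0) + (if int j = Q + int r then 2 else 0) + (if int j = Q + 2 * int r then 1 else 0))"
    by (rule sum_mono) (rule pt)
  also have "\<dots> = (\<Sum>j\<in>{1..<N}. if int j = Q then 1 else 0) + (\<Sum>j\<in>{1..<N}. if int j = Q + int r then 2 else 0)
      + (\<Sum>j\<in>{1..<N}. if int j = Q + 2 * int r then 1 else (0::real))"
    by (simp add: sum.distrib)
  also have "\<dots> \<le> 1 + 2 + 1"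
    by (intro add_mono sum_ind_le) auto
  finally show ?thesis by simp
qed

lemma l1_bound:
  assumes "r > 0"
  shows "(\<Sum>j\<in>{1..N}. \<bar>g b r (int j - 1 - Q)\<bar>) \<le> 2 * real r"
proof -
  let ?S = "{j\<in>{1..N}. Q + 1 \<le> int j \<and> int j \<le> Q + 2 * int r}"
  have pt: "\<bar>g b r (int j - 1 - Q)\<bar> \<le> (if Q + 1 \<le> int j \<and> int j \<le> Q + 2 * int r then 1 else 0)" for j
  proof (cases "Q + 1 \<le> int j \<and> int j \<le> Q + 2 * int r")
    case True then show ?thesis using g_bound by simp
  next
    case False
    then have "g b r (int j - 1 - Q) = 0" using assms by (intro g_zero) auto
    then show ?thesis using False by simp
  qed
  have "(\<Sum>j\<in>{1..N}. \<bar>g b r (int j - 1 - Q)\<bar>) \<le> (\<Sum>j\<in>{1..N}. if Q + 1 \<le> int j \<and> int j \<le> Q + 2 * int r then 1 else (0::real))"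
    by (rule sum_mono) (rule pt)
  also have "\<dots> = real (card ?S)"
    by (simp add: sum.inter_filter[symmetric])
  also have "card ?S \<le> 2 * r"
  proof -
    have "card ?S = card (int ` ?S)" by (simp add: card_image)
    also have "\<dots> \<le> card {Q+1..Q + 2 * int r}" by (rule card_mono) auto
    also have "\<dots> = 2 * r" by simp
    finally show ?thesis .
  qed
  hence "real (card ?S) \<le> 2 * real r" by linarith
  finally show ?thesis .
qed


lemma sum_sep: "(\<Sum>j\<in>I. \<Sum>k\<in>J. c * (X j * Y k)) = c * sum X I * (sum Y J :: real)"
proof -
  have "c * sum X I * sum Y J = c * (\<Sum>j\<in>I. \<Sum>k\<in>J. X j * Y k)" by (simp only: mult.assoc sum_product)
  also have "\<dots> = (\<Sum>j\<in>I. \<Sum>k\<in>J. c * (X j * Y k))" by (simp add: sum_distrib_left)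
  finally show ?thesis by simp
qed

lemma grad_sep:
  fixes A B :: "nat \<Rightarrow> real"
  assumes "c \<ge> 0"
  shows "grad_l1 N (\<lambda>j k. c * A j * B k) =
     c * (\<Sum>j\<in>{1..<N}. \<bar>A (j+1) - A j\<bar>) * (\<Sum>k\<in>{1..N}. \<bar>B k\<bar>)
   + c * (\<Sum>j\<in>{1..N}. \<bar>A j\<bar>) * (\<Sum>k\<in>{1..<N}. \<bar>B (k+1) - B k\<bar>)"
proof -
  have a: "\<bar>c * A (j+1) * B k - c * A j * B k\<bar> = c * \<bar>A (j+1) - A j\<bar> * \<bar>B k\<bar>" for j k
  proof -
    have "c * A (j+1) * B k - c * A j * B k = c * (A (j+1) - A j) * B k" by (simp add: algebra_simps)
    then show ?thesis using assms by (simp add: abs_mult)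
  qed
  have b: "\<bar>c * A j * B (k+1) - c * A j * B k\<bar> = c * \<bar>A j\<bar> * \<bar>B (k+1) - B k\<bar>" for j k
  proof -
    have "c * A j * B (k+1) - c * A j * B k = c * A j * (B (k+1) - B k)" by (simp add: algebra_simps)
    then show ?thesis using assms by (simp add: abs_mult)
  qed
  show ?thesis unfolding grad_l1_def a b
    by (simp add: mult.assoc sum_sep)
qed

theorem lemma10:
  fixes n p :: nat and e :: "nat \<times> nat" and q :: "int \<times> int"
  assumes "e \<in> {(0,1), (1,0), (1,1)}"
    and "p \<le> n - 1" and "n \<ge> 1"
    and "0 \<le> fst q" and "fst q < 2 ^ p"
    and "0 \<le> snd q" and "snd q < 2 ^ p"
  shows "grad_l1 (2 ^ n) (haar_img n e p q) \<le> 8"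
proof -
  define r :: nat where "r = 2 ^ (n - p - 1)"
  have r0: "r > 0" unfolding r_def by simp
  have nn: "n = p + (n - p - 1) + 1" using assms by simp
  have hs: "(2::real) ^ n = 2 ^ p * (2 * real r)"
    unfolding r_def by (subst nn) (simp add: power_add)
  define c :: real where "c = 2 ^ p / 2 ^ n"
  have c0: "c \<ge> 0" unfolding c_def by simp
  have cr: "c * (2 * real r) = 1" unfolding c_def hs using r0 by simp
  define A where "A j = g (fst e) r (int j - 1 - fst q * (2 * int r))" for j
  define B where "B k = g (snd e) r (int k - 1 - snd q * (2 * int r))" for k
  have arg: "2 ^ p * (real j - 1) / 2 ^ n - of_int Q = (real j - 1 - of_int Q * (2 * real r)) / (2 * real r)" for j and Q :: int
    unfolding hs using r0 by (simp add: field_simps)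
  have img: "haar_img n e p q = (\<lambda>j k. c * A j * B k)"
    unfolding haar_img_def haar_pq_def haar_biv_def A_def B_def g_def c_def
    by (intro ext) (simp add: arg)
  have tvA: "(\<Sum>j\<in>{1..<2^n}. \<bar>A (j+1) - A j\<bar>) \<le> 4"
  proof -
    have "(\<Sum>j\<in>{1..<2^n}. \<bar>A (j+1) - A j\<bar>) =
      (\<Sum>j\<in>{1..<2^n}. \<bar>g (fst e) r (int j - fst q * (2 * int r)) - g (fst e) r (int j - fst q * (2 * int r) - 1)\<bar>)"
      unfolding A_def by (intro sum.cong) (simp_all add: algebra_simps)
    also have "\<dots> \<le> 4" by (rule tv_bound[OF r0])
    finally show ?thesis .
  qed
  have tvB: "(\<Sum>j\<in>{1..<2^n}. \<bar>B (j+1) - B j\<bar>) \<le> 4"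
  proof -
    have "(\<Sum>j\<in>{1..<2^n}. \<bar>B (j+1) - B j\<bar>) =
      (\<Sum>j\<in>{1..<2^n}. \<bar>g (snd e) r (int j - snd q * (2 * int r)) - g (snd e) r (int j - snd q * (2 * int r) - 1)\<bar>)"
      unfolding B_def by (intro sum.cong) (simp_all add: algebra_simps)
    also have "\<dots> \<le> 4" by (rule tv_bound[OF r0])
    finally show ?thesis .
  qed
  have lA: "(\<Sum>j\<in>{1..2^n}. \<bar>A j\<bar>) \<le> 2 * real r"
    unfolding A_def by (rule l1_bound[OF r0])
  have lB: "(\<Sum>j\<in>{1..2^n}. \<bar>B j\<bar>) \<le> 2 * real r"
    unfolding B_def by (rule l1_bound[OF r0])
  have "c * (\<Sum>j\<in>{1..<2^n}. \<bar>A (j+1) - A j\<bar>) * (\<Sum>k\<in>{1..2^n}. \<bar>B k\<bar>) \<le> c * 4 * (2 * real r)"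
    using c0 tvA lB by (intro mult_mono mult_left_mono) (auto intro: sum_nonneg)
  moreover have "c * (\<Sum>j\<in>{1..2^n}. \<bar>A j\<bar>) * (\<Sum>k\<in>{1..<2^n}. \<bar>B (k+1) - B k\<bar>) \<le> c * (2 * real r) * 4"
    using c0 tvB lA by (intro mult_mono mult_left_mono) (auto intro: sum_nonneg)
  ultimately have "grad_l1 (2 ^ n) (haar_img n e p q) \<le> c * 4 * (2 * real r) + c * (2 * real r) * 4"
    unfolding img grad_sep[OF c0] by linarith
  also have "\<dots> = 8" using cr by (simp add: algebra_simps)
  finally show ?thesis .
qed

end
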